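(* Let $D$ be a convex subset of a topological vector space $X$, $K$ a nonempty set, and $C$ a cone with nonempty interior in a topological vector space $Y$. Let $f: D\times K\rightrightarrows Y$ and $g: D\times D\rightrightarrows Y$ be set-valued mappings satisfying: (i) for each $y\in K$, the set $\{x\in D: f(x,y)\not\subseteq -\operatorname{int}C\}$ is compactly closed; (ii) for any nonempty finite subset $A$ of $D$ and all $z\in\operatorname{co}(A)$, there exists $x\in A$ such that $g(x,z)\subseteq -C$; (iii) for each $y\in K$ there exists $z\in D$ such that for all $x\in D$, $g(z,x)\subseteq -C$ implies $f(x,y)\not\subseteq -\operatorname{int}C$; (iv) there exist a nonempty compact subset $M$ of $D$ and a finite subset $L$ of $K$ such that for each $x\in D\setminus M$ there exists $y\in L$ with $f(x,y)\subseteq -\operatorname{int}C$. Then there exists $\bar x\in M$ such that $f(\bar x,y)\not\subseteq -\operatorname{int}C$ for all $y\in K$.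
   Context: A subset $A$ of a topological space $X$ is compactly closed if for every compact subset $M$ of $X$ the set $A\cap M$ is closed in $M$. $\operatorname{co}(A)$ denotes the convex hull of $A$, and $\operatorname{int}C$ the interior of $C$. *)

theory Defs
  imports "HOL-Analysis.Analysis"
begin

definition is_tvs :: "('a::{real_vector,topological_space}) itself \<Rightarrow> bool" where
  "is_tvs _ \<longleftrightarrow>
     continuous_on UNIV (\<lambda>p::'a \<times> 'a. fst p + snd p) \<and>
     continuous_on UNIV (\<lambda>p::real \<times> 'a. fst p *\<^sub>R snd p)"

definition compactly_closed :: "'a::topological_space set \<Rightarrow> bool" where
  "compactly_closed A \<longleftrightarrow>
     (\<forall>M. compact M \<longrightarrow> closedin (top_of_set M) (A \<inter> M))"

end

theory Submission
  imports Defs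
begin


definition convn :: "nat \<Rightarrow> (nat \<Rightarrow> nat \<Rightarrow> real) \<Rightarrow> (nat \<Rightarrow> real) \<Rightarrow> bool" where
  "convn n xs x \<longleftrightarrow> (\<forall>i<n. (\<lambda>k. xs k i) \<longlonglongrightarrow> x i)"

definition Qc :: "nat \<Rightarrow> (nat \<Rightarrow> real) set" where
  "Qc n = {x. \<forall>i<n. 0 \<le> x i \<and> x i \<le> 1}"

definition Simp :: "nat \<Rightarrow> (nat \<Rightarrow> real) set" where
  "Simp n = {x. (\<forall>i<n. 0 \<le> x i) \<and> (\<Sum>i<n. x i) = 1}"

lemma bolzano_Qc:
  fixes xs :: "nat \<Rightarrow> nat \<Rightarrow> real"
  assumes "\<forall>k. xs k \<in> Qc n"
  shows "\<exists>r x. strict_mono r \<and> x \<in> Qc n \<and> convn n (xs \<circ> r) x"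
proof -
  have "\<forall>d\<subseteq>{..<n}. \<exists>l::nat\<Rightarrow>real. \<exists>r::nat\<Rightarrow>nat. strict_mono r \<and>
      (\<forall>e>0. eventually (\<lambda>m. \<forall>i\<in>d. dist (xs (r m) i) (l i) < e) sequentially)"
  proof (rule compact_lemma_general[where proj = "\<lambda>x i. x i" and unproj = "\<lambda>x. x"])
    fix k assume "k \<in> {..<n}"
    then have "(\<lambda>x. x k) ` range xs \<subseteq> {0..1}" using assms by (auto simp: Qc_def)
    then show "bounded ((\<lambda>x. x k) ` range xs)"
      by (meson bounded_closed_interval bounded_subset)
  qed auto
  then obtain l r where r: "strict_mono r"
    and ev: "\<forall>e>0. eventually (\<lambda>m. \<forall>i\<in>{..<n}. dist (xs (r m) i) (l i) < e) sequentially"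
    by blast
  have c: "convn n (xs \<circ> r) l"
    unfolding convn_def
  proof (intro allI impI)
    fix i assume "i < n"
    show "(\<lambda>k. (xs \<circ> r) k i) \<longlonglongrightarrow> l i"
      unfolding tendsto_iff
    proof (intro allI impI)
      fix e :: real assume "e > 0"
      then show "eventually (\<lambda>m. dist ((xs \<circ> r) m i) (l i) < e) sequentially"
        using ev \<open>i < n\<close> by (auto elim!: eventually_mono)
    qed
  qed
  have "l \<in> Qc n"
    unfolding Qc_def
  proof (intro CollectI allI impI conjI)
    fix i assume i: "i < n"
    have t: "(\<lambda>k. (xs \<circ> r) k i) \<longlonglongrightarrow> l i" using c i by (simp add: convn_def)
    show "0 \<le> l i"
      by (rule LIMSEQ_le_const[OF t]) (use assms i in \<open>auto simp: Qc_def\<close>)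
    show "l i \<le> 1"
      by (rule LIMSEQ_le_const2[OF t]) (use assms i in \<open>auto simp: Qc_def\<close>)
  qed
  then show ?thesis using r c by blast
qed

lemma convn_close:
  fixes W Z :: "nat \<Rightarrow> nat \<Rightarrow> real"
  assumes c: "convn n Z z" and b: "\<And>k j. j < n \<Longrightarrow> \<bar>W k j - Z k j\<bar> \<le> e k" and e: "e \<longlonglongrightarrow> 0"
  shows "convn n W z"
  unfolding convn_def
proof (intro allI impI)
  fix j assume j: "j < n"
  have "(\<lambda>k. W k j - Z k j) \<longlonglongrightarrow> 0"
    by (rule Lim_null_comparison[OF _ e]) (use b j in auto)
  moreover have "(\<lambda>k. Z k j) \<longlonglongrightarrow> z j" using c j by (simp add: convn_def)
  ultimately have "(\<lambda>k. (W k j - Z k j) + Z k j) \<longlonglongrightarrow> 0 + z j"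
    by (rule tendsto_add)
  then show "(\<lambda>k. W k j) \<longlonglongrightarrow> z j" by simp
qed

lemma brouwer_Qc:
  fixes f :: "(nat \<Rightarrow> real) \<Rightarrow> (nat \<Rightarrow> real)"
  assumes fQ: "\<forall>x\<in>Qc n. f x \<in> Qc n"
    and cont: "\<forall>xs x. (\<forall>k. xs k \<in> Qc n) \<longrightarrow> x \<in> Qc n \<longrightarrow> convn n xs x \<longrightarrow> convn n (\<lambda>k. f (xs k)) (f x)"
  shows "\<exists>x\<in>Qc n. \<forall>i<n. f x i = x i"
proof -
  define lab where "lab x i = (if x i = 0 then 0 else if x i = 1 then 1 else if x i \<le> f x i then 0 else (1::nat))"
    for x :: "nat \<Rightarrow> real" and i
  have lab01: "lab x i = 0 \<or> lab x i = 1" for x i by (auto simp: lab_def)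
  have lab0: "x i \<le> f x i" if "x \<in> Qc n" "i < n" "lab x i = 0" for x i
  proof -
    have "f x \<in> Qc n" using fQ that(1) by blast
    then show ?thesis using that by (auto simp: lab_def Qc_def split: if_splits)
  qed
  have lab1: "f x i \<le> x i" if "x \<in> Qc n" "i < n" "lab x i = 1" for x i
  proof -
    have "f x \<in> Qc n" using fQ that(1) by blast
    then show ?thesis using that by (auto simp: lab_def Qc_def split: if_splits)
  qed
  define P where "P m i u v Z \<longleftrightarrow> u \<in> Qc n \<and> v \<in> Qc n \<and> u i \<le> f u i \<and> f v i \<le> v i \<and>
     (\<forall>j<n. \<bar>u j - Z j\<bar> \<le> inverse (real (Suc m)) \<and> \<bar>v j - Z j\<bar> \<le> inverse (real (Suc m)))"
    for m i u v and Z :: "nat \<Rightarrow> real"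
  have step: "\<exists>z. z \<in> Qc n \<and> (\<forall>i<n. \<exists>u v. P m i u v z)" for m
  proof -
    define p where "p = Suc m"
    have p0: "0 < p" by (simp add: p_def)
    define gp where "gp y = (\<lambda>i. real (y i) / real p)" for y :: "nat \<Rightarrow> nat"
    have gpQ: "gp y \<in> Qc n" if "\<forall>i<n. y i \<le> p" for y
      using that p0 by (auto simp: gp_def Qc_def divide_le_eq_1)
    obtain q where q1: "\<forall>i<n. q i < p" and
      q2: "\<forall>i<n. \<exists>r s. (\<forall>j<n. q j \<le> r j \<and> r j \<le> q j + 1) \<and> (\<forall>j<n. q j \<le> s j \<and> s j \<le> q j + 1)
             \<and> lab (gp r) i \<noteq> lab (gp s) i"
    proof (rule kuhn_lemma[of p n "\<lambda>y i. lab (gp y) i"])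
      show "0 < p" by (rule p0)
      show "\<forall>x. (\<forall>i<n. x i \<le> p) \<longrightarrow> (\<forall>i<n. lab (gp x) i = 0 \<or> lab (gp x) i = 1)"
        using lab01 by blast
      show "\<forall>x. (\<forall>i<n. x i \<le> p) \<longrightarrow> (\<forall>i<n. x i = 0 \<longrightarrow> lab (gp x) i = 0)"
        by (auto simp: lab_def gp_def)
      show "\<forall>x. (\<forall>i<n. x i \<le> p) \<longrightarrow> (\<forall>i<n. x i = p \<longrightarrow> lab (gp x) i = 1)"
        using p0 by (auto simp: lab_def gp_def)
    qed auto
    have close: "\<bar>gp r j - gp q j\<bar> \<le> inverse (real (Suc m))" if "q j \<le> r j \<and> r j \<le> q j + 1" for r j
    proof -
      have "\<bar>gp r j - gp q j\<bar> = \<bar>real (r j) - real (q j)\<bar> / real p"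
        using p0 by (simp add: gp_def flip: diff_divide_distrib)
      also have "\<dots> \<le> 1 / real p"
        using that p0 by (intro divide_right_mono) auto
      finally show ?thesis by (simp add: p_def divide_inverse)
    qed
    have "gp q \<in> Qc n" using q1 by (intro gpQ) (auto simp: less_imp_le)
    moreover have "\<forall>i<n. \<exists>u v. P m i u v (gp q)"
    proof (intro allI impI)
      fix i assume i: "i < n"
      obtain r s where rs: "\<forall>j<n. q j \<le> r j \<and> r j \<le> q j + 1" "\<forall>j<n. q j \<le> s j \<and> s j \<le> q j + 1"
        "lab (gp r) i \<noteq> lab (gp s) i"
        using q2 i by blast
      have rQ: "gp r \<in> Qc n" using rs(1) q1 by (intro gpQ) (metis Suc_eq_plus1 Suc_leI le_trans)
      have sQ: "gp s \<in> Qc n" using rs(2) q1 by (intro gpQ) (metis Suc_eq_plus1 Suc_leI le_trans)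
      have cl: "\<forall>j<n. \<bar>gp r j - gp q j\<bar> \<le> inverse (real (Suc m)) \<and> \<bar>gp s j - gp q j\<bar> \<le> inverse (real (Suc m))"
        using close rs by blast
      show "\<exists>u v. P m i u v (gp q)"
      proof (cases "lab (gp r) i = 0")
        case True
        then have "lab (gp s) i = 1" using rs(3) lab01 by metis
        then have "P m i (gp r) (gp s) (gp q)"
          using True rQ sQ cl lab0 lab1 i by (auto simp: P_def)
        then show ?thesis by blast
      next
        case False
        then have "lab (gp r) i = 1" "lab (gp s) i = 0" using rs(3) lab01 by metis+
        then have "P m i (gp s) (gp r) (gp q)"
          using rQ sQ cl lab0 lab1 i by (auto simp: P_def)
        then show ?thesis by blast
      qed
    qed
    ultimately show ?thesis by blast
  qed
  define Z where "Z m = (SOME z. z \<in> Qc n \<and> (\<forall>i<n. \<exists>u v. P m i u v z))" for m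
  have Z: "Z m \<in> Qc n \<and> (\<forall>i<n. \<exists>u v. P m i u v (Z m))" for m
    unfolding Z_def using step[of m] by (rule someI_ex)
  define U where "U m i = (SOME u. \<exists>v. P m i u v (Z m))" for m i
  define V where "V m i = (SOME v. P m i (U m i) v (Z m))" for m i
  have UV: "P m i (U m i) (V m i) (Z m)" if "i < n" for m i
  proof -
    have "\<exists>u v. P m i u v (Z m)" using Z that by blast
    then have "\<exists>v. P m i (U m i) v (Z m)" unfolding U_def by (rule someI_ex)
    then show ?thesis unfolding V_def by (rule someI_ex)
  qed
  obtain r z where r: "strict_mono r" and zQ: "z \<in> Qc n" and cz: "convn n (Z \<circ> r) z"
    using bolzano_Qc[of Z n] Z by blast
  have e0: "(\<lambda>k. inverse (real (Suc (r k)))) \<longlonglongrightarrow> 0"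
    using LIMSEQ_subseq_LIMSEQ[OF LIMSEQ_inverse_real_of_nat r] by (simp add: o_def)
  have "f z i = z i" if i: "i < n" for i
  proof -
    have cU: "convn n (\<lambda>k. U (r k) i) z"
      by (rule convn_close[OF cz _ e0]) (use UV[OF i] in \<open>auto simp: P_def\<close>)
    have cV: "convn n (\<lambda>k. V (r k) i) z"
      by (rule convn_close[OF cz _ e0]) (use UV[OF i] in \<open>auto simp: P_def\<close>)
    have UQ: "\<forall>k. U (r k) i \<in> Qc n" and VQ: "\<forall>k. V (r k) i \<in> Qc n"
      using UV[OF i] by (auto simp: P_def)
    have fU: "convn n (\<lambda>k. f (U (r k) i)) (f z)" using cont[rule_format, of "\<lambda>k. U (r k) i" z] UQ zQ cU by simp
    have fV: "convn n (\<lambda>k. f (V (r k) i)) (f z)" using cont[rule_format, of "\<lambda>k. V (r k) i" z] VQ zQ cV by simp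
    have "z i \<le> f z i"
    proof (rule LIMSEQ_le)
      show "(\<lambda>k. U (r k) i i) \<longlonglongrightarrow> z i" using cU i by (simp add: convn_def)
      show "(\<lambda>k. f (U (r k) i) i) \<longlonglongrightarrow> f z i" using fU i by (simp add: convn_def)
      show "\<exists>N. \<forall>k\<ge>N. U (r k) i i \<le> f (U (r k) i) i" using UV[OF i] by (auto simp: P_def)
    qed
    moreover have "f z i \<le> z i"
    proof (rule LIMSEQ_le)
      show "(\<lambda>k. V (r k) i i) \<longlonglongrightarrow> z i" using cV i by (simp add: convn_def)
      show "(\<lambda>k. f (V (r k) i) i) \<longlonglongrightarrow> f z i" using fV i by (simp add: convn_def)
      show "\<exists>N. \<forall>k\<ge>N. f (V (r k) i) i \<le> V (r k) i i" using UV[OF i] by (auto simp: P_def)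
    qed
    ultimately show ?thesis by simp
  qed
  then show ?thesis using zQ by blast
qed

definition nd :: "nat \<Rightarrow> (nat \<Rightarrow> real) \<Rightarrow> (nat \<Rightarrow> real) \<Rightarrow> real" where
  "nd n x y = (\<Sum>j<n. \<bar>x j - y j\<bar>)"

definition dd :: "nat \<Rightarrow> (nat \<Rightarrow> real) set \<Rightarrow> (nat \<Rightarrow> real) \<Rightarrow> real" where
  "dd n S x = (if S = {} then 1 else Inf (nd n x ` S))"

lemma nd_nonneg: "0 \<le> nd n x y"
  by (simp add: nd_def sum_nonneg)

lemma nd_self: "nd n x x = 0"
  by (simp add: nd_def)

lemma nd_triangle: "nd n x z \<le> nd n x y + nd n y z"
proof -
  have "nd n x z \<le> (\<Sum>j<n. \<bar>x j - y j\<bar> + \<bar>y j - z j\<bar>)"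
    unfolding nd_def by (rule sum_mono) linarith
  also have "\<dots> = nd n x y + nd n y z" by (simp add: nd_def sum.distrib)
  finally show ?thesis .
qed

lemma nd_sym: "nd n x y = nd n y x"
  by (simp add: nd_def abs_minus_commute)

lemma nd_coord: "j < n \<Longrightarrow> \<bar>x j - y j\<bar> \<le> nd n x y"
  unfolding nd_def by (rule member_le_sum) auto

lemma dd_nonneg: "0 \<le> dd n S x"
  unfolding dd_def by (auto intro!: cInf_greatest simp: nd_nonneg)

lemma dd_le: "y \<in> S \<Longrightarrow> dd n S x \<le> nd n x y"
  unfolding dd_def by (auto intro!: cInf_lower bdd_belowI[where m=0] simp: nd_nonneg)

lemma dd_lip: "dd n S x \<le> dd n S y + nd n x y"
proof (cases "S = {}")
  case True then show ?thesis by (simp add: dd_def nd_nonneg)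
next
  case False
  have "dd n S x - nd n x y \<le> Inf (nd n y ` S)"
  proof (rule cInf_greatest)
    show "nd n y ` S \<noteq> {}" using False by simp
    fix t assume "t \<in> nd n y ` S"
    then obtain z where z: "z \<in> S" "t = nd n y z" by blast
    have "dd n S x \<le> nd n x z" by (rule dd_le[OF z(1)])
    also have "\<dots> \<le> nd n x y + nd n y z" by (rule nd_triangle)
    finally show "dd n S x - nd n x y \<le> t" using z by simp
  qed
  then show ?thesis using False by (simp add: dd_def)
qed

lemma dd_abs: "\<bar>dd n S x - dd n S y\<bar> \<le> nd n x y"
  using dd_lip[of n S x y] dd_lip[of n S y x] nd_sym[of n x y] by linarith

lemma dd_zero:
  assumes "dd n S x = 0" "e > 0"
  shows "\<exists>y\<in>S. nd n x y < e"
proof -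
  have S: "S \<noteq> {}" using assms by (auto simp: dd_def)
  show ?thesis
  proof (rule ccontr)
    assume "\<not> ?thesis"
    then have "e \<le> Inf (nd n x ` S)"
      using S by (intro cInf_greatest) auto
    then show False using assms S by (simp add: dd_def)
  qed
qed

lemma convn_nd:
  assumes "convn n xs x"
  shows "(\<lambda>k. nd n (xs k) x) \<longlonglongrightarrow> 0"
proof -
  have "(\<lambda>k. \<Sum>j<n. \<bar>xs k j - x j\<bar>) \<longlonglongrightarrow> (\<Sum>j<n. \<bar>x j - x j\<bar>)"
    using assms by (intro tendsto_intros) (auto simp: convn_def)
  then show ?thesis by (simp add: nd_def)
qed

lemma dd_cont:
  assumes "convn n xs x"
  shows "(\<lambda>k. dd n S (xs k)) \<longlonglongrightarrow> dd n S x"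
proof -
  have "(\<lambda>k. dd n S (xs k) - dd n S x) \<longlonglongrightarrow> 0"
    by (rule Lim_null_comparison[OF _ convn_nd[OF assms]]) (auto simp: dd_abs)
  then have "(\<lambda>k. (dd n S (xs k) - dd n S x) + dd n S x) \<longlonglongrightarrow> 0 + dd n S x"
    by (intro tendsto_intros)
  then show ?thesis by simp
qed

lemma dd_zero_mem:
  assumes closedS: "\<forall>xs. (\<forall>k. xs k \<in> S) \<longrightarrow> convn n xs x \<longrightarrow> x \<in> S"
    and d: "dd n S x = 0"
  shows "x \<in> S"
proof -
  have "\<forall>k. \<exists>y\<in>S. nd n x y < inverse (real (Suc k))"
    using dd_zero[OF d] by simp
  then obtain w where w: "\<forall>k. w k \<in> S \<and> nd n x (w k) < inverse (real (Suc k))"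
    by metis
  have "convn n w x"
  proof (rule convn_close[where Z = "\<lambda>k. x"])
    show "convn n (\<lambda>k. x) x" by (simp add: convn_def)
    show "(\<lambda>k. inverse (real (Suc k))) \<longlonglongrightarrow> 0" by (rule LIMSEQ_inverse_real_of_nat)
    fix k j assume "j < n"
    then have "\<bar>w k j - x j\<bar> \<le> nd n x (w k)"
      using nd_coord[of j n "w k" x] nd_sym by metis
    then show "\<bar>w k j - x j\<bar> \<le> inverse (real (Suc k))" using w by (meson less_imp_le order_trans)
  qed
  then show ?thesis using closedS w by blast
qed

lemma Simp_le1: "x \<in> Simp n \<Longrightarrow> i < n \<Longrightarrow> x i \<le> 1"
  unfolding Simp_def using member_le_sum[of i "{..<n}" x] by auto

lemma kkm:
  fixes F :: "nat \<Rightarrow> (nat \<Rightarrow> real) set"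
  assumes n: "0 < n"
    and closedF: "\<forall>i<n. \<forall>xs x. (\<forall>k. xs k \<in> F i) \<longrightarrow> x \<in> Simp n \<longrightarrow> convn n xs x \<longrightarrow> x \<in> F i"
    and cover: "\<forall>x\<in>Simp n. \<exists>i<n. 0 < x i \<and> x \<in> F i"
  shows "\<exists>x\<in>Simp n. \<forall>i<n. x \<in> F i"
proof (rule ccontr)
  assume no: "\<not> ?thesis"
  define Sd where "Sd x = (\<Sum>j<n. dd n (F j) x)" for x
  define phi where "phi x = (\<lambda>i. if i < n then (x i + dd n (F i) x) / (1 + Sd x) else 0)" for x
  define rt where "rt x = (\<lambda>i. (max 0 (x i) + max 0 (1 - (\<Sum>j<n. max 0 (x j))) / real n)
                     / max 1 (\<Sum>j<n. max 0 (x j)))" for x :: "nat \<Rightarrow> real"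
  have Sd0: "0 \<le> Sd x" for x by (simp add: Sd_def sum_nonneg dd_nonneg)
  have rtS: "rt x \<in> Simp n" for x
  proof -
    let ?s = "\<Sum>j<n. max 0 (x j)"
    have s0: "0 \<le> ?s" by (simp add: sum_nonneg)
    have "(\<Sum>i<n. rt x i) = (\<Sum>i<n. max 0 (x i) + max 0 (1 - ?s) / real n) / max 1 ?s"
      by (simp add: rt_def sum_divide_distrib)
    also have "\<dots> = (?s + max 0 (1 - ?s)) / max 1 ?s" using n by (simp add: sum.distrib)
    also have "\<dots> = 1"
    proof (cases "?s \<le> 1")
      case True then show ?thesis by (simp add: max_def)
    next
      case False then show ?thesis by (simp add: max_def)
    qed
    finally have "(\<Sum>i<n. rt x i) = 1" .
    moreover have "0 \<le> rt x i" for i by (simp add: rt_def)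
    ultimately show ?thesis by (simp add: Simp_def)
  qed
  have rt_id: "rt x i = x i" if "x \<in> Simp n" "i < n" for x i
  proof -
    have "(\<Sum>j<n. max 0 (x j)) = (\<Sum>j<n. x j)"
      using that(1) by (intro sum.cong) (auto simp: Simp_def)
    then have "(\<Sum>j<n. max 0 (x j)) = 1" using that(1) by (simp add: Simp_def)
    then show ?thesis using that by (simp add: rt_def Simp_def)
  qed
  have phiS: "phi y \<in> Simp n" if "y \<in> Simp n" for y
  proof -
    have "(\<Sum>i<n. phi y i) = (\<Sum>i<n. y i + dd n (F i) y) / (1 + Sd y)"
      by (simp add: phi_def sum_divide_distrib)
    also have "\<dots> = 1" using that Sd0[of y] by (simp add: sum.distrib Simp_def Sd_def)
    finally show ?thesis using that Sd0[of y] by (auto simp: Simp_def phi_def dd_nonneg)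
  qed
  have phiQ: "phi y \<in> Qc n" if "y \<in> Simp n" for y
  proof -
    have "phi y i \<le> 1" if i: "i < n" for i
    proof -
      have "y i \<le> 1" using Simp_le1 \<open>y \<in> Simp n\<close> i by blast
      moreover have "dd n (F i) y \<le> Sd y"
        unfolding Sd_def using i by (intro member_le_sum) (auto simp: dd_nonneg)
      ultimately show ?thesis using Sd0[of y] i by (simp add: phi_def)
    qed
    then show ?thesis using phiS[OF that] by (auto simp: Qc_def Simp_def)
  qed
  have cont_rt: "convn n (\<lambda>k. rt (xs k)) (rt x)" if "convn n xs x" for xs x
    unfolding convn_def rt_def
  proof (intro allI impI)
    fix i assume "i < n"
    then show "(\<lambda>k. (max 0 (xs k i) + max 0 (1 - (\<Sum>j<n. max 0 (xs k j))) / real n) / max 1 (\<Sum>j<n. max 0 (xs k j)))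
       \<longlonglongrightarrow> (max 0 (x i) + max 0 (1 - (\<Sum>j<n. max 0 (x j))) / real n) / max 1 (\<Sum>j<n. max 0 (x j))"
      using that by (intro tendsto_intros) (auto simp: convn_def)
  qed
  have cont_phi: "convn n (\<lambda>k. phi (ys k)) (phi y)" if "convn n ys y" for ys y
    unfolding convn_def phi_def
  proof (intro allI impI)
    fix i assume i: "i < n"
    have "(\<lambda>k. Sd (ys k)) \<longlonglongrightarrow> Sd y"
      unfolding Sd_def by (intro tendsto_sum dd_cont that)
    moreover have "(\<lambda>k. ys k i) \<longlonglongrightarrow> y i" using that i by (simp add: convn_def)
    moreover have "(\<lambda>k. dd n (F i) (ys k)) \<longlonglongrightarrow> dd n (F i) y" by (rule dd_cont[OF that])
    ultimately have "(\<lambda>k. (ys k i + dd n (F i) (ys k)) / (1 + Sd (ys k))) \<longlonglongrightarrow> (y i + dd n (F i) y) / (1 + Sd y)"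
      using Sd0[of y] by (intro tendsto_intros) auto
    then show "(\<lambda>k. if i < n then (ys k i + dd n (F i) (ys k)) / (1 + Sd (ys k)) else 0)
       \<longlonglongrightarrow> (if i < n then (y i + dd n (F i) y) / (1 + Sd y) else 0)" using i by simp
  qed
  obtain x where xQ: "x \<in> Qc n" and fxp: "\<forall>i<n. phi (rt x) i = x i"
  proof -
    have "\<exists>x\<in>Qc n. \<forall>i<n. phi (rt x) i = x i"
    proof (rule brouwer_Qc)
      show "\<forall>x\<in>Qc n. phi (rt x) \<in> Qc n" using phiQ rtS by blast
      show "\<forall>xs x. (\<forall>k. xs k \<in> Qc n) \<longrightarrow> x \<in> Qc n \<longrightarrow> convn n xs x \<longrightarrow> convn n (\<lambda>k. phi (rt (xs k))) (phi (rt x))"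
        using cont_rt cont_phi by blast
    qed
    then show ?thesis using that by blast
  qed
  define y where "y = rt x"
  have yS: "y \<in> Simp n" unfolding y_def by (rule rtS)
  have xphi: "x i = phi y i" if "i < n" for i using fxp that unfolding y_def by metis
  have "x \<in> Simp n"
  proof -
    have pS: "phi y \<in> Simp n" by (rule phiS[OF yS])
    have "(\<Sum>i<n. x i) = (\<Sum>i<n. phi y i)" by (rule sum.cong) (use xphi in auto)
    then have "(\<Sum>i<n. x i) = 1" using pS unfolding Simp_def by simp
    moreover have "\<forall>i<n. 0 \<le> x i" using pS xphi unfolding Simp_def by simp
    ultimately show ?thesis unfolding Simp_def by blast
  qed
  then have yfix: "phi y i = y i" if "i < n" for i
    using xphi[OF that] rt_id[OF _ that] unfolding y_def by metis
  obtain i where i: "i < n" "y \<notin> F i" using no yS by blast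
  have "dd n (F i) y \<noteq> 0"
  proof
    assume "dd n (F i) y = 0"
    then have "y \<in> F i"
      by (rule dd_zero_mem[rotated]) (use closedF i yS in blast)
    then show False using i by blast
  qed
  then have "0 < dd n (F i) y" using dd_nonneg[of n "F i" y] by linarith
  then have Spos: "0 < Sd y"
    unfolding Sd_def using i by (intro sum_pos2[of "{..<n}" i]) (auto simp: dd_nonneg)
  obtain j where j: "j < n" "0 < y j" "y \<in> F j" using cover yS by blast
  have "dd n (F j) y = 0"
    using dd_le[OF j(3), of n y] dd_nonneg[of n "F j" y] by (simp add: nd_self)
  then have "y j = y j / (1 + Sd y)" using yfix[OF j(1)] j(1) by (simp add: phi_def)
  moreover have "1 + Sd y \<noteq> 0" using Sd0[of y] by linarith
  ultimately have "y j * (1 + Sd y) = y j"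
    by (simp add: field_simps)
  then have "y j * Sd y = 0" by (simp add: algebra_simps)
  then show False using j(2) Spos by simp
qed



lemma tvs_add_tendsto:
  fixes f g :: "'b \<Rightarrow> 'a::{real_vector,topological_space}"
  assumes tvs: "is_tvs TYPE('a)" and f: "(f \<longlongrightarrow> a) F" and g: "(g \<longlongrightarrow> b) F"
  shows "((\<lambda>k. f k + g k) \<longlongrightarrow> a + b) F"
proof -
  have "continuous_on UNIV (\<lambda>p::'a \<times> 'a. fst p + snd p)" using tvs by (simp add: is_tvs_def)
  from continuous_on_tendsto_compose[OF this tendsto_Pair[OF f g]] show ?thesis by simp
qed

lemma tvs_scale_tendsto:
  fixes c :: "'b \<Rightarrow> real"
  assumes tvs: "is_tvs TYPE('a::{real_vector,topological_space})" and c: "(c \<longlongrightarrow> r) F"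
  shows "((\<lambda>k. c k *\<^sub>R (v::'a)) \<longlongrightarrow> r *\<^sub>R v) F"
proof -
  have "continuous_on UNIV (\<lambda>p::real \<times> 'a. fst p *\<^sub>R snd p)" using tvs by (simp add: is_tvs_def)
  from continuous_on_tendsto_compose[OF this tendsto_Pair[OF c tendsto_const]] show ?thesis by simp
qed

lemma tvs_p_tendsto:
  fixes a :: "nat \<Rightarrow> 'a::{real_vector,topological_space}"
  assumes tvs: "is_tvs TYPE('a)" and c: "convn n xs x" and mn: "m \<le> n"
  shows "(\<lambda>k. \<Sum>i<m. xs k i *\<^sub>R a i) \<longlonglongrightarrow> (\<Sum>i<m. x i *\<^sub>R a i)"
  using mn
proof (induction m)
  case 0
  then show ?case by simp
next
  case (Suc m)
  have "(\<lambda>k. xs k m) \<longlonglongrightarrow> x m" using c Suc.prems by (simp add: convn_def)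
  then have "(\<lambda>k. xs k m *\<^sub>R a m) \<longlonglongrightarrow> x m *\<^sub>R a m" by (rule tvs_scale_tendsto[OF tvs])
  with Suc show ?case by (simp add: tvs_add_tendsto[OF tvs])
qed

lemma compact_seq_limit:
  fixes s :: "nat \<Rightarrow> 'a::topological_space"
  assumes "s \<longlonglongrightarrow> l"
  shows "compact (insert l (range s))"
proof (rule compactI)
  fix C assume op: "\<forall>t\<in>C. open t" and cov: "insert l (range s) \<subseteq> \<Union>C"
  obtain c0 where c0: "c0 \<in> C" "l \<in> c0" using cov by blast
  then have "eventually (\<lambda>k. s k \<in> c0) sequentially"
    using assms op by (simp add: topological_tendstoD)
  then obtain N where N: "\<And>k. k \<ge> N \<Longrightarrow> s k \<in> c0" by (auto simp: eventually_sequentially)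
  have "\<forall>k. \<exists>c\<in>C. s k \<in> c" using cov by blast
  then obtain cf where cf: "\<And>k. cf k \<in> C \<and> s k \<in> cf k" by metis
  show "\<exists>C'\<subseteq>C. finite C' \<and> insert l (range s) \<subseteq> \<Union>C'"
  proof (intro exI conjI)
    show "insert c0 (cf ` {..<N}) \<subseteq> C" using c0 cf by auto
    show "finite (insert c0 (cf ` {..<N}))" by simp
    show "insert l (range s) \<subseteq> \<Union>(insert c0 (cf ` {..<N}))"
    proof
      fix x assume "x \<in> insert l (range s)"
      then consider "x = l" | k where "x = s k" by blast
      then show "x \<in> \<Union>(insert c0 (cf ` {..<N}))"
      proof cases
        case 1 then show ?thesis using c0 by blast
      next
        case 2
        show ?thesis
        proof (cases "k < N")
          case True then show ?thesis using cf 2 by blast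
        next
          case False then show ?thesis using N 2 by auto
        qed
      qed
    qed
  qed
qed

lemma cc_seq:
  assumes G: "compactly_closed G" and s: "\<forall>k. s k \<in> G" and l: "s \<longlonglongrightarrow> l"
  shows "l \<in> G"
proof -
  let ?K = "insert l (range s)"
  have "closedin (top_of_set ?K) (G \<inter> ?K)"
    using G compact_seq_limit[OF l] by (simp add: compactly_closed_def)
  then obtain T where T: "closed T" "G \<inter> ?K = ?K \<inter> T" by (auto simp: closedin_closed)
  have "\<forall>k. s k \<in> T" using s T(2) by blast
  then have "l \<in> T" using Lim_in_closed_set[OF T(1) _ trivial_limit_sequentially l] by simp
  then show ?thesis using T(2) by blast
qed

theorem corollary3p5:
  fixes D :: "'x::{real_vector,topological_space} set"
    and K :: "'k set"
    and C :: "'y::{real_vector,topological_space} set"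
    and f :: "'x \<Rightarrow> 'k \<Rightarrow> 'y set"
    and g :: "'x \<Rightarrow> 'x \<Rightarrow> 'y set"
    and M :: "'x set"
    and L :: "'k set"
  assumes tvsX: "is_tvs TYPE('x)"
    and tvsY: "is_tvs TYPE('y)"
    and convD: "convex D"
    and K_ne: "K \<noteq> {}"
    and coneC: "cone C"
    and intC: "interior C \<noteq> {}"
    and i: "\<forall>y\<in>K. compactly_closed {x\<in>D. \<not> (f x y \<subseteq> uminus ` interior C)}"
    and ii: "\<forall>A. A \<subseteq> D \<and> A \<noteq> {} \<and> finite A \<longrightarrow>
               (\<forall>z\<in>convex hull A. \<exists>x\<in>A. g x z \<subseteq> uminus ` C)"
    and iii: "\<forall>y\<in>K. \<exists>z\<in>D. \<forall>x\<in>D. g z x \<subseteq> uminus ` C \<longrightarrow> \<not> (f x y \<subseteq> uminus ` interior C)"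
    and iv_M: "M \<noteq> {}" "compact M" "M \<subseteq> D"
    and iv_L: "finite L" "L \<subseteq> K"
    and iv: "\<forall>x\<in>D - M. \<exists>y\<in>L. f x y \<subseteq> uminus ` interior C"
  shows "\<exists>xb\<in>M. \<forall>y\<in>K. \<not> (f xb y \<subseteq> uminus ` interior C)"
proof -
  define Gs where "Gs y = {x\<in>D. \<not> (f x y \<subseteq> uminus ` interior C)}" for y
  have "\<forall>y\<in>K. \<exists>zz. zz \<in> D \<and> (\<forall>x\<in>D. g zz x \<subseteq> uminus ` C \<longrightarrow> x \<in> Gs y)"
    using iii unfolding Gs_def by blast
  then have "\<exists>z. \<forall>y\<in>K. z y \<in> D \<and> (\<forall>x\<in>D. g (z y) x \<subseteq> uminus ` C \<longrightarrow> x \<in> Gs y)"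
    by (rule bchoice)
  then obtain z where z: "\<And>y. y \<in> K \<Longrightarrow> z y \<in> D \<and> (\<forall>x\<in>D. g (z y) x \<subseteq> uminus ` C \<longrightarrow> x \<in> Gs y)"
    by blast
  have fin: "\<exists>x. \<forall>y\<in>F. x \<in> Gs y" if F: "finite F" "F \<subseteq> K" "F \<noteq> {}" for F
  proof -
    define A where "A = z ` F"
    have A: "finite A" "A \<noteq> {}" "A \<subseteq> D" using F z by (auto simp: A_def)
    define n where "n = card A"
    have n: "0 < n" using A by (simp add: n_def card_gt_0_iff)
    obtain a where a: "bij_betw a {..<n} A"
      using ex_bij_betw_nat_finite[OF A(1)] by (auto simp: n_def atLeast0LessThan)
    have aA: "a i \<in> A" if "i < n" for i using a that by (auto simp: bij_betw_def)
    define p where "p lam = (\<Sum>i<n. lam i *\<^sub>R a i)" for lam :: "nat \<Rightarrow> real"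
    define FF where "FF i = {lam \<in> Simp n. \<forall>y\<in>F. z y = a i \<longrightarrow> p lam \<in> Gs y}" for i
    have "\<exists>lam\<in>Simp n. \<forall>i<n. lam \<in> FF i"
    proof (rule kkm[OF n])
      show "\<forall>i<n. \<forall>xs x. (\<forall>k. xs k \<in> FF i) \<longrightarrow> x \<in> Simp n \<longrightarrow> convn n xs x \<longrightarrow> x \<in> FF i"
      proof (intro allI impI)
        fix i xs x assume iln: "i < n" and xs: "\<forall>k. xs k \<in> FF i" and x: "x \<in> Simp n" and c: "convn n xs x"
        have "p x \<in> Gs y" if y: "y \<in> F" "z y = a i" for y
        proof -
          have yK: "y \<in> K" using y F by blast
          have G: "compactly_closed (Gs y)" using i yK by (simp add: Gs_def)
          have S: "\<forall>k. p (xs k) \<in> Gs y"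
          proof
            fix k
            have "xs k \<in> FF i" using xs by blast
            then show "p (xs k) \<in> Gs y" using y unfolding FF_def by blast
          qed
          have T: "(\<lambda>k. p (xs k)) \<longlonglongrightarrow> p x"
            unfolding p_def by (rule tvs_p_tendsto[OF tvsX c order_refl])
          show ?thesis by (rule cc_seq[OF G S T])
        qed
        then show "x \<in> FF i" using x unfolding FF_def by blast
      qed
      show "\<forall>x\<in>Simp n. \<exists>i<n. 0 < x i \<and> x \<in> FF i"
      proof
        fix lam assume lam: "lam \<in> Simp n"
        define J where "J = {i. i < n \<and> 0 < lam i}"
        have Jsub: "J \<subseteq> {..<n}" by (auto simp: J_def)
        have zero: "lam i = 0" if "i \<in> {..<n} - J" for i using that lam by (auto simp: J_def Simp_def)
        have sumJ: "(\<Sum>i\<in>J. lam i) = 1"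
        proof -
          have "(\<Sum>i\<in>J. lam i) = (\<Sum>i<n. lam i)"
            by (rule sum.mono_neutral_left) (use Jsub zero in auto)
          then show ?thesis using lam by (simp add: Simp_def)
        qed
        have pJ: "p lam = (\<Sum>i\<in>J. lam i *\<^sub>R a i)"
          unfolding p_def by (rule sum.mono_neutral_right) (use Jsub zero in auto)
        have Jne: "J \<noteq> {}" using sumJ by auto
        define B where "B = a ` J"
        have fJ: "finite J" using Jsub finite_subset by blast
        have B1: "B \<subseteq> D" using Jsub aA A(3) unfolding B_def by blast
        have B2: "B \<noteq> {}" using Jne unfolding B_def by blast
        have B3: "finite B" using fJ unfolding B_def by blast
        note B = B1 B2 B3
        have pB: "p lam \<in> convex hull B"
          unfolding pJ
        proof (rule convex_sum)
          show "finite J" by (rule fJ)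
          show "convex (convex hull B)" by simp
          show "sum lam J = 1" by (rule sumJ)
          show "\<And>i. i \<in> J \<Longrightarrow> 0 \<le> lam i" by (auto simp: J_def)
          show "\<And>i. i \<in> J \<Longrightarrow> a i \<in> convex hull B" by (auto simp: B_def hull_inc)
        qed
        have pD: "p lam \<in> D"
          using pB hull_minimal[of B D convex, OF B(1) convD] by blast
        obtain x where x: "x \<in> B" "g x (p lam) \<subseteq> uminus ` C" using ii B pB by blast
        then obtain j where j: "j \<in> J" "x = a j" by (auto simp: B_def)
        have "p lam \<in> Gs y" if y: "y \<in> F" "z y = a j" for y
        proof -
          have "y \<in> K" using y F by blast
          then have "\<forall>x\<in>D. g (z y) x \<subseteq> uminus ` C \<longrightarrow> x \<in> Gs y" using z by blast
          then show ?thesis using pD x j y by metis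
        qed
        then have "lam \<in> FF j"
          unfolding FF_def using lam by blast
        then show "\<exists>i<n. 0 < lam i \<and> lam \<in> FF i" using j by (auto simp: J_def)
      qed
    qed
    then obtain lam where lam: "\<forall>i<n. lam \<in> FF i" by blast
    have "p lam \<in> Gs y" if y: "y \<in> F" for y
    proof -
      have "z y \<in> A" using y by (simp add: A_def)
      then obtain i where "i < n" "a i = z y" using a by (auto simp: bij_betw_def)
      then show ?thesis using lam y by (auto simp: FF_def)
    qed
    then show ?thesis by blast
  qed
  have "\<forall>y\<in>K. \<exists>T. closed T \<and> Gs y \<inter> M = M \<inter> T"
  proof
    fix y assume "y \<in> K"
    then have "closedin (top_of_set M) (Gs y \<inter> M)"
      using i iv_M(2) unfolding Gs_def compactly_closed_def by blast
    then show "\<exists>T. closed T \<and> Gs y \<inter> M = M \<inter> T" by (simp add: closedin_closed)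
  qed
  then have "\<exists>T. \<forall>y\<in>K. closed (T y) \<and> Gs y \<inter> M = M \<inter> T y" by (rule bchoice)
  then obtain T where T: "\<And>y. y \<in> K \<Longrightarrow> closed (T y) \<and> Gs y \<inter> M = M \<inter> T y" by blast
  have "M \<inter> \<Inter>(T ` K) \<noteq> {}"
  proof (rule compact_imp_fip[OF iv_M(2)])
    show "\<And>S. S \<in> T ` K \<Longrightarrow> closed S" using T by blast
    fix F' assume F': "finite F'" "F' \<subseteq> T ` K"
    then obtain F'' where F'': "F'' \<subseteq> K" "finite F''" "F' = T ` F''"
      by (meson finite_subset_image)
    obtain y0 where y0: "y0 \<in> K" using K_ne by blast
    define E where "E = insert y0 (F'' \<union> L)"
    have "finite E" "E \<subseteq> K" "E \<noteq> {}" using F'' iv_L y0 by (auto simp: E_def)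
    then obtain x where x: "\<forall>y\<in>E. x \<in> Gs y" using fin by blast
    have xD: "x \<in> D" using x by (auto simp: E_def Gs_def)
    have xM: "x \<in> M"
    proof (rule ccontr)
      assume "x \<notin> M"
      then obtain y where "y \<in> L" "f x y \<subseteq> uminus ` interior C" using iv xD by blast
      then show False using x by (auto simp: E_def Gs_def)
    qed
    have "x \<in> T y" if "y \<in> F''" for y
    proof -
      have "x \<in> Gs y \<inter> M" using x xM that by (auto simp: E_def)
      then show ?thesis using T[of y] that F''(1) by blast
    qed
    then have "x \<in> M \<inter> \<Inter>F'"
      using xM F''(3) by blast
    then show "M \<inter> \<Inter>F' \<noteq> {}" by blast
  qed
  then obtain x where x: "x \<in> M" "\<forall>y\<in>K. x \<in> T y" by blast
  have "\<forall>y\<in>K. x \<in> Gs y" using x T by blast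
  then show ?thesis using x(1) by (auto simp: Gs_def)
qed

end
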